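(* Let $h\in C_\mathbb{R}(\mathcal{X}^n)$ and $\mu\in\mathrm{Prob}(\mathcal{X}^n)$ with marginals $\mu_1,\dots,\mu_n$, and for $1\le i\le n$ let $h_i(x)=\log\sum_{x_1,\dots,x_{i-1},x_{i+1},\dots,x_n\in\mathcal{X}}e^{h(x_1,\dots,x_{i-1},x,x_{i+1},\dots,x_n)}$, $x\in\mathcal{X}$. The following are equivalent: (i) $\mu$ is the Gibbs measure associated with $h$; (ii) $\mu$ is mutually equilibrium associated with $h$ and, for each $i$, $\mu_i$ is the Gibbs measure associated with $h_i$.
   Context: $\mathcal{X}=\{t_1,\dots,t_d\}$ is a finite set with a fixed order $t_1<\dots<t_d$; $n\in\mathbb{N}$. $\mathrm{Prob}(\mathcal{X}^k)$ is the set of probability measures on $\mathcal{X}^k$, $C_\mathbb{R}(\mathcal{X}^k)$ the real functions on $\mathcal{X}^k$; $\mu(h)=\sum_\mathbf{x}h(\mathbf{x})\mu(\mathbf{x})$. The pressure is $P(h)=\log\sum_{\mathbf{x}\in\mathcal{X}^k}e^{h(\mathbf{x})}$ and the Gibbs measure associated with $h$ is $\mathbf{x}\mapsto e^{h(\mathbf{x})-P(h)}$. For $\mathbf{x}\in\mathcal{X}^N$ its type is $\nu_\mathbf{x}(t)=\#\{j:x_j=t\}/N$. $\mathcal{X}_\le^N$ is the set of sequences in $\mathcal{X}^N$ of the form $(t_1,\dots,t_1,\dots,t_d,\dots,t_d)$. $S_N$ acts by $\sigma(\mathbf{x})=(x_{\sigma^{-1}(1)},\dots,x_{\sigma^{-1}(N)})$.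 An approximating sequence for $(\mu_1,\dots,\mu_n)$ is $\Xi(N)=(\xi_1(N),\dots,\xi_n(N))$ with $\xi_i(N)\in\mathcal{X}_\le^N$ and $\nu_{\xi_i(N)}(t)\to\mu_i(t)$ for all $t$. For $h\in C_\mathbb{R}(\mathcal{X}^n)$ and $\mathbf{x}_i=(x_{i1},\dots,x_{iN})$, $\kappa_N(h(\mathbf{x}_1,\dots,\mathbf{x}_n))=\frac1N\sum_{j=1}^Nh(x_{1j},\dots,x_{nj})$. The mutual pressure is $$P_\mathrm{sym}(h:\mu_1,\dots,\mu_n)=\limsup_{N\to\infty}\frac1N\log\Biggl[\frac1{(N!)^n}\sum_{\sigma_1,\dots,\sigma_n\in S_N}\exp\bigl(N\kappa_N(h(\sigma_1(\xi_1(N)),\dots,\sigma_n(\xi_n(N))))\bigr)\Biggr]$$ (independent of the approximating sequence). $\mathcal{I}_\mathrm{sym}(\mu)=\sup\{\mu(h)-P_\mathrm{sym}(h:\mu_1,\dots,\mu_n):h\in C_\mathbb{R}(\mathcal{X}^n)\}$, and $\mu$ is mutually equilibrium associated with $h$ if $\mathcal{I}_\mathrm{sym}(\mu)=\mu(h)-P_\mathrm{sym}(h:\mu_1,\dots,\mu_n)$. *)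

theory Defs
  imports "HOL-Analysis.Analysis" "HOL-Combinatorics.Permutations"
begin

text \<open>The finite alphabet X is a finite linearly ordered type 'a; X^n is the
  function type 'i \<Rightarrow> 'a for a finite index type 'i with CARD('i) = n.\<close>

definition is_prob :: "('b::finite \<Rightarrow> real) \<Rightarrow> bool" where
  "is_prob \<mu> \<longleftrightarrow> (\<forall>x. 0 \<le> \<mu> x) \<and> (\<Sum>x\<in>UNIV. \<mu> x) = 1"

definition integ :: "('b::finite \<Rightarrow> real) \<Rightarrow> ('b \<Rightarrow> real) \<Rightarrow> real" where
  "integ \<mu> h = (\<Sum>x\<in>UNIV. h x * \<mu> x)"

definition pressure :: "('b::finite \<Rightarrow> real) \<Rightarrow> real" where
  "pressure h = ln (\<Sum>x\<in>UNIV. exp (h x))"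

definition gibbs :: "('b::finite \<Rightarrow> real) \<Rightarrow> 'b \<Rightarrow> real" where
  "gibbs h x = exp (h x - pressure h)"

definition marginal :: "(('i::finite \<Rightarrow> 'a::finite) \<Rightarrow> real) \<Rightarrow> 'i \<Rightarrow> 'a \<Rightarrow> real" where
  "marginal \<mu> i t = (\<Sum>x\<in>{x. x i = t}. \<mu> x)"

definition hmarg :: "(('i::finite \<Rightarrow> 'a::finite) \<Rightarrow> real) \<Rightarrow> 'i \<Rightarrow> 'a \<Rightarrow> real" where
  "hmarg h i t = ln (\<Sum>x\<in>{x. x i = t}. exp (h x))"

definition seq_type :: "'a list \<Rightarrow> 'a \<Rightarrow> real" where
  "seq_type xs t = real (count_list xs t) / real (length xs)"

definition approx_seq :: "(nat \<Rightarrow> 'i \<Rightarrow> 'a::linorder list) \<Rightarrow> ('i \<Rightarrow> 'a \<Rightarrow> real) \<Rightarrow> bool" where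
  "approx_seq \<xi> \<mu>s \<longleftrightarrow>
     (\<forall>N i. length (\<xi> N i) = N \<and> sorted (\<xi> N i)) \<and>
     (\<forall>i t. (\<lambda>N. seq_type (\<xi> N i) t) \<longlonglongrightarrow> \<mu>s i t)"

text \<open>The averaged partition function: (1/(N!)^n) \<Sum>_{\<sigma>_1..\<sigma>_n \<in> S_N}
  exp(N \<kappa>_N(h(\<sigma>_1(\<xi>_1(N)),...,\<sigma>_n(\<xi>_n(N))))), where \<sigma>(x)_j = x_{\<sigma>^{-1}(j)}
  and permutations of {1..N} are represented as permutations of {0..<N}.\<close>
definition sym_partition :: "(('i::finite \<Rightarrow> 'a) \<Rightarrow> real) \<Rightarrow> (nat \<Rightarrow> 'i \<Rightarrow> 'a list) \<Rightarrow> nat \<Rightarrow> real" where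
  "sym_partition h \<xi> N =
     (1 / (fact N) ^ CARD('i)) *
     (\<Sum>s\<in>PiE UNIV (\<lambda>_. {\<sigma>. \<sigma> permutes {..<N}}).
        exp (\<Sum>j<N. h (\<lambda>i. \<xi> N i ! (inv (s i) j))))"

text \<open>Mutual pressure (as an extended real), computed along an approximating
  sequence (the paper asserts independence of the choice).\<close>
definition Psym :: "(('i::finite \<Rightarrow> 'a::{finite,linorder}) \<Rightarrow> real) \<Rightarrow> ('i \<Rightarrow> 'a \<Rightarrow> real) \<Rightarrow> ereal" where
  "Psym h \<mu>s = (let \<xi> = (SOME \<xi>. approx_seq \<xi> \<mu>s) in
      limsup (\<lambda>N. ereal (ln (sym_partition h \<xi> N) / real N)))"

definition Isym :: "(('i::finite \<Rightarrow> 'a::{finite,linorder}) \<Rightarrow> real) \<Rightarrow> ereal" where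
  "Isym \<mu> = (SUP h\<in>UNIV. ereal (integ \<mu> h) - Psym h (marginal \<mu>))"

definition mutual_equilibrium :: "(('i::finite \<Rightarrow> 'a::{finite,linorder}) \<Rightarrow> real) \<Rightarrow> (('i \<Rightarrow> 'a) \<Rightarrow> real) \<Rightarrow> bool" where
  "mutual_equilibrium \<mu> h \<longleftrightarrow> Isym \<mu> = ereal (integ \<mu> h) - Psym h (marginal \<mu>)"

end

theory Submission
  imports Defs "HOL-Combinatorics.Multiset_Permutations" "HOL-Real_Asymp.Real_Asymp"
begin


lemma mlnm_step: "real m * ln (real m + 1) \<le> real m * ln (real m) + 1"
proof (cases "m = 0")
  case False
  then have mp: "real m > 0" by simp
  have "ln (real m + 1) - ln (real m) = ln ((real m + 1) / real m)"
    using mp by (simp add: ln_div)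
  also have "\<dots> = ln (1 + 1 / real m)" using mp by (simp add: field_simps)
  also have "\<dots> \<le> 1 / real m" using mp by (intro ln_add_one_self_le_self) simp
  finally have "real m * (ln (real m + 1) - ln (real m)) \<le> real m * (1 / real m)"
    using mp by (intro mult_left_mono) auto
  then show ?thesis using mp by (simp add: algebra_simps)
qed simp

lemma ln_fact_lower: "real m * ln (real m) - real m \<le> ln (fact m)"
proof (induction m)
  case (Suc m)
  have "ln (fact (Suc m) :: real) = ln (real m + 1) + ln (fact m)"
    by (simp add: ln_mult add.commute)
  moreover have "real m * ln (real m + 1) \<le> real m * ln (real m) + 1" by (rule mlnm_step)
  ultimately show ?case using Suc by (simp add: algebra_simps)
qed simp

lemma ln_fact_upper_aux: "ln (fact m) \<le> (real m + 1) * ln (real m + 1) - real m"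
proof (induction m)
  case (Suc m)
  have "ln (fact (Suc m) :: real) = ln (real m + 1) + ln (fact m)"
    by (simp add: ln_mult add.commute)
  have "ln ((real m + 1) / (real m + 2)) \<le> (real m + 1) / (real m + 2) - 1"
    by (intro ln_le_minus_one) auto
  also have "\<dots> = - 1 / (real m + 2)" by (simp add: field_simps)
  finally have "ln (real m + 1) - ln (real m + 2) \<le> - 1 / (real m + 2)"
    by (simp add: ln_div)
  then have "(real m + 2) * (ln (real m + 1) - ln (real m + 2)) \<le> (real m + 2) * (- 1 / (real m + 2))"
    by (intro mult_left_mono) auto
  then have "(real m + 2) * ln (real m + 1) + 1 \<le> (real m + 2) * ln (real m + 2)"
    by (simp add: algebra_simps)
  then show ?case using Suc \<open>ln (fact (Suc m) :: real) = _\<close>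
    by (simp add: algebra_simps)
qed simp

lemma ln_fact_upper: "ln (fact m) \<le> real m * ln (real m) - real m + ln (real m + 1) + 1"
  using ln_fact_upper_aux[of m] mlnm_step[of m] by (simp add: algebra_simps)



definition ent :: "('b::finite \<Rightarrow> real) \<Rightarrow> real" where
  "ent p = - (\<Sum>x\<in>UNIV. p x * ln (p x))"

lemma sum_count_UNIV: "(\<Sum>x\<in>UNIV. count (A::'b::finite multiset) x) = size A"
proof -
  have "(\<Sum>x\<in>UNIV. count A x) = (\<Sum>x\<in>set_mset A. count A x)"
    by (intro sum.mono_neutral_right) (auto simp: not_in_iff)
  then show ?thesis by (simp add: size_multiset_overloaded_eq)
qed

lemma card_pmset_eq:
  "real (card (permutations_of_multiset (A::'b::finite multiset))) * (\<Prod>x\<in>UNIV. fact (count A x)) = fact (size A)"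
proof -
  have "(\<Prod>x\<in>UNIV. fact (count A x) :: nat) = (\<Prod>x\<in>set_mset A. fact (count A x))"
    by (intro prod.mono_neutral_right) (auto simp: not_in_iff)
  moreover have "card (permutations_of_multiset A) * (\<Prod>x\<in>set_mset A. fact (count A x)) = fact (size A)"
    using card_permutations_of_multiset[of A] by simp
  ultimately have "card (permutations_of_multiset A) * (\<Prod>x\<in>UNIV. fact (count A x) :: nat) = fact (size A)"
    by simp
  then have "real (card (permutations_of_multiset A) * (\<Prod>x\<in>UNIV. fact (count A x) :: nat)) = real (fact (size A))"
    by simp
  then show ?thesis by (simp add: of_nat_prod)
qed

lemma ln_card_pmset:
  "ln (real (card (permutations_of_multiset (A::'b::finite multiset)))) = ln (fact (size A)) - (\<Sum>x\<in>UNIV. ln (fact (count A x)))"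
proof -
  have pos: "real (card (permutations_of_multiset A)) > 0"
    by (simp add: card_gt_0_iff)
  have "ln (real (card (permutations_of_multiset A)) * (\<Prod>x\<in>UNIV. fact (count A x))) = ln (fact (size A))"
    by (simp only: card_pmset_eq)
  moreover have "ln (real (card (permutations_of_multiset A)) * (\<Prod>x\<in>UNIV. fact (count A x))) =
     ln (real (card (permutations_of_multiset A))) + (\<Sum>x\<in>UNIV. ln (fact (count A x)))"
  proof -
    have "(\<Prod>x\<in>UNIV. fact (count A x) :: real) > 0" by (intro prod_pos) auto
    then have "ln (real (card (permutations_of_multiset A)) * (\<Prod>x\<in>UNIV. fact (count A x))) =
      ln (real (card (permutations_of_multiset A))) + ln (\<Prod>x\<in>UNIV. fact (count A x) :: real)"
      using pos by (simp add: ln_mult)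
    moreover have "ln (\<Prod>x\<in>UNIV. fact (count A x) :: real) = (\<Sum>x\<in>UNIV. ln (fact (count A x)))"
      by (rule ln_prod) auto
    ultimately show ?thesis by simp
  qed
  ultimately show ?thesis by simp
qed

lemma ent_counts:
  fixes A :: "'b::finite multiset"
  assumes "size A > 0"
  shows "real (size A) * ent (\<lambda>x. real (count A x) / real (size A)) =
     real (size A) * ln (real (size A)) - (\<Sum>x\<in>UNIV. real (count A x) * ln (real (count A x)))"
proof -
  let ?N = "real (size A)"
  have N: "?N > 0" using assms by simp
  have t: "?N * (real (count A x) / ?N * ln (real (count A x) / ?N)) =
      real (count A x) * ln (real (count A x)) - real (count A x) * ln ?N" for x
  proof (cases "count A x = 0")
    case False
    then have "ln (real (count A x) / ?N) = ln (real (count A x)) - ln ?N" using N by (simp add: ln_div)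
    have "?N * (real (count A x) / ?N * ln (real (count A x) / ?N)) = real (count A x) * ln (real (count A x) / ?N)"
      using N by simp
    also have "\<dots> = real (count A x) * (ln (real (count A x)) - ln ?N)"
      by (simp only: \<open>ln (real (count A x) / ?N) = _\<close>)
    finally show ?thesis by (simp add: right_diff_distrib)
  qed simp
  have "?N * ent (\<lambda>x. real (count A x) / ?N) = - (\<Sum>x\<in>UNIV. ?N * (real (count A x) / ?N * ln (real (count A x) / ?N)))"
    by (simp add: ent_def sum_distrib_left)
  also have "\<dots> = - (\<Sum>x\<in>UNIV. real (count A x) * ln (real (count A x)) - real (count A x) * ln ?N)"
    using t by simp
  also have "\<dots> = (\<Sum>x\<in>UNIV. real (count A x)) * ln ?N - (\<Sum>x\<in>UNIV. real (count A x) * ln (real (count A x)))"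
    by (simp add: sum_subtractf sum_distrib_right)
  also have "(\<Sum>x\<in>UNIV. real (count A x)) = ?N"
    using sum_count_UNIV[of A] by (metis of_nat_sum)
  finally show ?thesis .
qed

lemma count_le_size_real: "real (count A x) \<le> real (size A)"
  by (simp add: count_le_size)

lemma ln_card_pmset_lower:
  fixes A :: "'b::finite multiset"
  assumes "size A > 0"
  shows "real (size A) * ent (\<lambda>x. real (count A x) / real (size A)) - real CARD('b) * (ln (real (size A) + 1) + 1)
     \<le> ln (real (card (permutations_of_multiset A)))"
proof -
  let ?N = "real (size A)"
  have a: "ln (fact (count A x)) \<le> real (count A x) * ln (real (count A x)) - real (count A x) + (ln (?N + 1) + 1)" for x
  proof -
    have l: "ln (real (count A x) + 1) \<le> ln (?N + 1)"
      using count_le_size_real[of A x] by simp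
    show ?thesis using ln_fact_upper[of "count A x"] l by linarith
  qed
  have "(\<Sum>x\<in>UNIV. ln (fact (count A x))) \<le> (\<Sum>x\<in>UNIV. real (count A x) * ln (real (count A x)) - real (count A x) + (ln (?N + 1) + 1))"
    by (intro sum_mono a)
  also have "\<dots> = (\<Sum>x\<in>UNIV. real (count A x) * ln (real (count A x))) - ?N + real CARD('b) * (ln (?N + 1) + 1)"
  proof -
    have "(\<Sum>x\<in>UNIV. real (count A x)) = ?N" using sum_count_UNIV[of A] by (metis of_nat_sum)
    then show ?thesis by (simp add: sum.distrib sum_subtractf)
  qed
  finally have b: "(\<Sum>x\<in>UNIV. ln (fact (count A x))) \<le> \<dots>" .
  show ?thesis
    using ln_card_pmset[of A] ent_counts[OF assms] ln_fact_lower[of "size A"] b by simp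
qed

lemma ln_card_pmset_upper:
  fixes A :: "'b::finite multiset"
  assumes "size A > 0"
  shows "ln (real (card (permutations_of_multiset A))) \<le>
    real (size A) * ent (\<lambda>x. real (count A x) / real (size A)) + ln (real (size A) + 1) + 1"
proof -
  let ?N = "real (size A)"
  have "(\<Sum>x\<in>UNIV. real (count A x) * ln (real (count A x)) - real (count A x)) \<le> (\<Sum>x\<in>UNIV. ln (fact (count A x)))"
    by (intro sum_mono ln_fact_lower)
  moreover have "(\<Sum>x\<in>UNIV. real (count A x) * ln (real (count A x)) - real (count A x)) =
      (\<Sum>x\<in>UNIV. real (count A x) * ln (real (count A x))) - ?N"
  proof -
    have "(\<Sum>x\<in>UNIV. real (count A x)) = ?N" using sum_count_UNIV[of A] by (metis of_nat_sum)
    then show ?thesis by (simp add: sum_subtractf)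
  qed
  ultimately show ?thesis
    using ln_card_pmset[of A] ent_counts[OF assms] ln_fact_upper[of "size A"] by simp
qed



lemma fiber_mono:
  assumes len: "length xs = N" and ys: "mset ys = mset xs" and ys': "mset ys' = mset xs"
  shows "card {\<sigma>. \<sigma> permutes {..<N} \<and> permute_list \<sigma> xs = ys} \<le> card {\<sigma>. \<sigma> permutes {..<N} \<and> permute_list \<sigma> xs = ys'}"
proof -
  have "mset ys' = mset ys" using ys ys' by simp
  then obtain \<tau> where \<tau>: "\<tau> permutes {..<length ys}" "permute_list \<tau> ys = ys'"
    by (rule mset_eq_permutation)
  have lys: "length ys = N" using ys len by (metis size_mset)
  have \<tau>N: "\<tau> permutes {..<N}" using \<tau> lys by simp
  show ?thesis
  proof (rule card_inj_on_le[where f = "\<lambda>\<sigma>. \<sigma> \<circ> \<tau>"])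
    show "inj_on (\<lambda>\<sigma>. \<sigma> \<circ> \<tau>) {\<sigma>. \<sigma> permutes {..<N} \<and> permute_list \<sigma> xs = ys}"
    proof (rule inj_onI)
      fix a b assume "a \<circ> \<tau> = b \<circ> \<tau>"
      then show "a = b" using permutes_surj[OF \<tau>N]
        by (metis comp_assoc comp_id permutes_inv_o(1)[OF \<tau>N])
    qed
    show "(\<lambda>\<sigma>. \<sigma> \<circ> \<tau>) ` {\<sigma>. \<sigma> permutes {..<N} \<and> permute_list \<sigma> xs = ys}
        \<subseteq> {\<sigma>. \<sigma> permutes {..<N} \<and> permute_list \<sigma> xs = ys'}"
    proof (rule image_subsetI)
      fix \<sigma> assume "\<sigma> \<in> {\<sigma>. \<sigma> permutes {..<N} \<and> permute_list \<sigma> xs = ys}"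
      then have s: "\<sigma> permutes {..<N}" "permute_list \<sigma> xs = ys" by auto
      have "\<sigma> \<circ> \<tau> permutes {..<N}" using \<tau>N s(1) by (rule permutes_compose)
      moreover have "permute_list (\<sigma> \<circ> \<tau>) xs = ys'"
        using permute_list_compose[of \<tau> xs \<sigma>] \<tau>N len s(2) \<tau>(2) by simp
      ultimately show "\<sigma> \<circ> \<tau> \<in> {\<sigma>. \<sigma> permutes {..<N} \<and> permute_list \<sigma> xs = ys'}" by simp
    qed
    show "finite {\<sigma>. \<sigma> permutes {..<N} \<and> permute_list \<sigma> xs = ys'}"
      by (rule finite_subset[of _ "{\<sigma>. \<sigma> permutes {..<N}}"]) (auto intro: finite_permutations)
  qed
qed

lemma fiber_card:
  assumes len: "length xs = N" and ys: "ys \<in> permutations_of_multiset (mset xs)"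
  shows "real (card {\<sigma>. \<sigma> permutes {..<N} \<and> permute_list \<sigma> xs = ys}) *
         real (card (permutations_of_multiset (mset xs))) = fact N"
proof -
  define P where "P = permutations_of_multiset (mset xs)"
  define S where "S = {\<sigma>. \<sigma> permutes {..<N}}"
  define c where "c = card {\<sigma>. \<sigma> permutes {..<N} \<and> permute_list \<sigma> xs = ys}"
  have ceq: "card {\<sigma>. \<sigma> permutes {..<N} \<and> permute_list \<sigma> xs = ys'} = c" if "ys' \<in> P" for ys'
  proof -
    have a: "mset ys' = mset xs" using that by (simp add: P_def permutations_of_multisetD)
    have b: "mset ys = mset xs" using ys by (simp add: permutations_of_multisetD)
    show ?thesis unfolding c_def using fiber_mono[OF len a b] fiber_mono[OF len b a] by simp
  qed
  have fS: "finite S" unfolding S_def by (simp add: finite_permutations)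
  have img: "(\<lambda>\<sigma>. permute_list \<sigma> xs) ` S = P"
  proof
    show "(\<lambda>\<sigma>. permute_list \<sigma> xs) ` S \<subseteq> P"
      using len by (auto simp: S_def P_def intro!: permutations_of_multisetI)
    show "P \<subseteq> (\<lambda>\<sigma>. permute_list \<sigma> xs) ` S"
    proof
      fix ys' assume "ys' \<in> P"
      then have "mset ys' = mset xs" by (simp add: P_def permutations_of_multisetD)
      then obtain p where "p permutes {..<length xs}" "permute_list p xs = ys'"
        by (rule mset_eq_permutation)
      then show "ys' \<in> (\<lambda>\<sigma>. permute_list \<sigma> xs) ` S" using len by (auto simp: S_def)
    qed
  qed
  have "card S = (\<Sum>ys'\<in>(\<lambda>\<sigma>. permute_list \<sigma> xs) ` S. card {\<sigma>. \<sigma> \<in> S \<and> permute_list \<sigma> xs = ys'})"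
    using sum.image_gen[OF fS, of "\<lambda>_. 1::nat" "\<lambda>\<sigma>. permute_list \<sigma> xs"] by simp
  also have "\<dots> = (\<Sum>ys'\<in>P. c)"
    unfolding img by (intro sum.cong refl) (simp add: S_def ceq)
  also have "\<dots> = c * card P" by simp
  finally have "card S = c * card P" .
  moreover have "card S = fact N" unfolding S_def using card_permutations[of "{..<N}" N] by simp
  ultimately have "c * card P = fact N" by simp
  then have "real (c * card P) = fact N" by (metis of_nat_fact)
  then show ?thesis by (simp add: c_def P_def)
qed



lemma sum_perm_PiE:
  fixes xs :: "'i::finite \<Rightarrow> 'a list" and G :: "('i \<Rightarrow> 'a list) \<Rightarrow> real"
  assumes len: "\<And>i. length (xs i) = N"
  shows "(\<Sum>s\<in>PiE UNIV (\<lambda>_. {\<sigma>. \<sigma> permutes {..<N}}). G (\<lambda>i. permute_list (s i) (xs i)))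
     = (fact N) ^ CARD('i) / (\<Prod>i\<in>UNIV. real (card (permutations_of_multiset (mset (xs i)))))
       * (\<Sum>Y\<in>PiE UNIV (\<lambda>i. permutations_of_multiset (mset (xs i))). G Y)"
proof -
  define S where "S = PiE (UNIV::'i set) (\<lambda>_. {\<sigma>. \<sigma> permutes {..<N}})"
  define P where "P = (\<lambda>i. permutations_of_multiset (mset (xs i)))"
  define \<Phi> where "\<Phi> = (\<lambda>s i. permute_list (s i) (xs i))"
  define A where "A = (\<lambda>i y. {\<sigma>. \<sigma> permutes {..<N} \<and> permute_list \<sigma> (xs i) = y})"
  have fS: "finite S" unfolding S_def by (intro finite_PiE) (auto intro: finite_permutations)
  have img: "\<Phi> ` S = PiE UNIV P"
  proof
    show "\<Phi> ` S \<subseteq> PiE UNIV P"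
    proof (rule image_subsetI)
      fix s assume "s \<in> S"
      then have "s i permutes {..<length (xs i)}" for i using len by (auto simp: S_def)
      then show "\<Phi> s \<in> PiE UNIV P"
        by (auto simp: P_def \<Phi>_def intro!: permutations_of_multisetI)
    qed
    show "PiE UNIV P \<subseteq> \<Phi> ` S"
    proof
      fix Y assume Y: "Y \<in> PiE UNIV P"
      have ex: "\<exists>\<sigma>. \<sigma> permutes {..<N} \<and> permute_list \<sigma> (xs i) = Y i" for i
      proof -
        have "Y i \<in> P i" using Y by auto
        then have "mset (Y i) = mset (xs i)" by (simp add: P_def permutations_of_multisetD)
        then obtain p where "p permutes {..<length (xs i)}" "permute_list p (xs i) = Y i"
          by (rule mset_eq_permutation)
        then show ?thesis using len by auto
      qed
      define s where "s = (\<lambda>i. SOME \<sigma>. \<sigma> permutes {..<N} \<and> permute_list \<sigma> (xs i) = Y i)"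
      have s: "s i permutes {..<N} \<and> permute_list (s i) (xs i) = Y i" for i
        unfolding s_def using someI_ex[OF ex[of i]] .
      have "s \<in> S" using s by (auto simp: S_def)
      moreover have "\<Phi> s = Y" using s by (auto simp: \<Phi>_def)
      ultimately show "Y \<in> \<Phi> ` S" by blast
    qed
  qed
  have fib: "{s. s \<in> S \<and> \<Phi> s = Y} = PiE UNIV (\<lambda>i. A i (Y i))" for Y
    by (auto simp: S_def A_def \<Phi>_def)
  have cardfib: "real (card {s. s \<in> S \<and> \<Phi> s = Y}) = (fact N) ^ CARD('i) / (\<Prod>i\<in>UNIV. real (card (P i)))"
    if "Y \<in> PiE UNIV P" for Y
  proof -
    have "real (card {s. s \<in> S \<and> \<Phi> s = Y}) = (\<Prod>i\<in>UNIV. real (card (A i (Y i))))"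
      unfolding fib by (simp add: card_PiE of_nat_prod)
    also have "\<dots> = (\<Prod>i\<in>UNIV. fact N / real (card (P i)))"
    proof (intro prod.cong refl)
      fix i
      have "Y i \<in> P i" using that by auto
      then have "real (card (A i (Y i))) * real (card (P i)) = fact N"
        unfolding A_def P_def by (intro fiber_card len)
      moreover have "real (card (P i)) > 0" unfolding P_def by (simp add: card_gt_0_iff)
      ultimately show "real (card (A i (Y i))) = fact N / real (card (P i))"
        by (simp add: field_simps)
    qed
    also have "\<dots> = (fact N) ^ CARD('i) / (\<Prod>i\<in>UNIV. real (card (P i)))"
      by (simp add: prod_dividef)
    finally show ?thesis .
  qed
  have "(\<Sum>s\<in>S. G (\<Phi> s)) = (\<Sum>Y\<in>\<Phi> ` S. \<Sum>s\<in>{s. s \<in> S \<and> \<Phi> s = Y}. G (\<Phi> s))"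
    by (rule sum.image_gen[OF fS])
  also have "\<dots> = (\<Sum>Y\<in>PiE UNIV P. real (card {s. s \<in> S \<and> \<Phi> s = Y}) * G Y)"
    unfolding img by (intro sum.cong refl) simp
  also have "\<dots> = (\<Sum>Y\<in>PiE UNIV P. (fact N) ^ CARD('i) / (\<Prod>i\<in>UNIV. real (card (P i))) * G Y)"
    by (intro sum.cong refl) (simp add: cardfib)
  also have "\<dots> = (fact N) ^ CARD('i) / (\<Prod>i\<in>UNIV. real (card (P i))) * (\<Sum>Y\<in>PiE UNIV P. G Y)"
    by (simp add: sum_distrib_left)
  finally show ?thesis by (simp add: S_def P_def \<Phi>_def)
qed


lemma sym_partition_eq:
  fixes g :: "('i::finite \<Rightarrow> 'a) \<Rightarrow> real"
  assumes len: "\<And>i. length (\<xi> N i) = N"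
  shows "sym_partition g \<xi> N =
    (\<Sum>Y\<in>PiE UNIV (\<lambda>i. permutations_of_multiset (mset (\<xi> N i))). exp (\<Sum>j<N. g (\<lambda>i. Y i ! j)))
    / (\<Prod>i\<in>UNIV. real (card (permutations_of_multiset (mset (\<xi> N i)))))"
proof -
  define S where "S = PiE (UNIV::'i set) (\<lambda>_. {\<sigma>. \<sigma> permutes {..<N}})"
  define G where "G = (\<lambda>Y::'i \<Rightarrow> 'a list. exp (\<Sum>j<N. g (\<lambda>i. Y i ! j)))"
  have "(\<Sum>s\<in>S. exp (\<Sum>j<N. g (\<lambda>i. \<xi> N i ! (inv (s i) j)))) = (\<Sum>s\<in>S. exp (\<Sum>j<N. g (\<lambda>i. \<xi> N i ! (s i j))))"
  proof (rule sum.reindex_bij_witness[of S "\<lambda>s i. inv (s i)" "\<lambda>s i. inv (s i)"])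
    fix s assume "s \<in> S"
    then have p: "s i permutes {..<N}" for i by (auto simp: S_def)
    show "(\<lambda>i. inv (inv (s i))) = s" using permutes_inv_inv[OF p] by (simp add: fun_eq_iff)
    show "(\<lambda>i. inv (s i)) \<in> S" using p by (auto simp: S_def permutes_inv)
  next
    fix s assume "s \<in> S"
    then have p: "s i permutes {..<N}" for i by (auto simp: S_def)
    show "(\<lambda>i. inv (inv (s i))) = s" using permutes_inv_inv[OF p] by (simp add: fun_eq_iff)
    show "(\<lambda>i. inv (s i)) \<in> S" using p by (auto simp: S_def permutes_inv)
  qed simp
  also have "\<dots> = (\<Sum>s\<in>S. G (\<lambda>i. permute_list (s i) (\<xi> N i)))"
  proof (intro sum.cong refl)
    fix s assume "s \<in> S"
    then have p: "s i permutes {..<length (\<xi> N i)}" for i using len by (auto simp: S_def)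
    show "exp (\<Sum>j<N. g (\<lambda>i. \<xi> N i ! (s i j))) = G (\<lambda>i. permute_list (s i) (\<xi> N i))"
      unfolding G_def using p len by (simp add: permute_list_nth)
  qed
  also have "\<dots> = (fact N) ^ CARD('i) / (\<Prod>i\<in>UNIV. real (card (permutations_of_multiset (mset (\<xi> N i)))))
       * (\<Sum>Y\<in>PiE UNIV (\<lambda>i. permutations_of_multiset (mset (\<xi> N i))). G Y)"
    unfolding S_def by (rule sum_perm_PiE[OF len])
  finally show ?thesis
    by (simp add: sym_partition_def S_def G_def)
qed


lemma sum_mset_count:
  fixes g :: "'b::finite \<Rightarrow> real"
  shows "(\<Sum>x\<in>#K. g x) = (\<Sum>x\<in>UNIV. real (count K x) * g x)"
proof (induction K)
  case empty then show ?case by simp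
next
  case (add a K)
  have "(\<Sum>x\<in>UNIV. real (count (add_mset a K) x) * g x) =
        (\<Sum>x\<in>UNIV. real (count K x) * g x + (if x = a then g x else 0))"
    by (intro sum.cong refl) (auto simp: algebra_simps)
  also have "\<dots> = (\<Sum>x\<in>UNIV. real (count K x) * g x) + g a"
    by (simp add: sum.distrib)
  finally show ?case using add by simp
qed

lemma sumY_upper:
  fixes g :: "('i::finite \<Rightarrow> 'a::finite) \<Rightarrow> real"
  assumes len: "\<And>i. length (xs i) = N"
  shows "(\<Sum>Y\<in>PiE UNIV (\<lambda>i. permutations_of_multiset (mset (xs i))). exp (\<Sum>j<N. g (\<lambda>i. Y i ! j)))
     \<le> (\<Sum>x\<in>UNIV. exp (g x)) ^ N"
proof -
  define T where "T = PiE (UNIV::'i set) (\<lambda>i. permutations_of_multiset (mset (xs i)))"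
  define \<Psi> where "\<Psi> = (\<lambda>Y::'i \<Rightarrow> 'a list. \<lambda>j\<in>{..<N}. \<lambda>i. Y i ! j)"
  have lenY: "length (Y i) = N" if "Y \<in> T" for Y i
  proof -
    have "Y i \<in> permutations_of_multiset (mset (xs i))" using that by (auto simp: T_def)
    then have "mset (Y i) = mset (xs i)" by (rule permutations_of_multisetD)
    then show ?thesis using len by (metis size_mset)
  qed
  have inj: "inj_on \<Psi> T"
  proof (rule inj_onI)
    fix Y Y' assume Y: "Y \<in> T" and Y': "Y' \<in> T" and eq: "\<Psi> Y = \<Psi> Y'"
    show "Y = Y'"
    proof
      fix i
      show "Y i = Y' i"
      proof (rule nth_equalityI)
        show "length (Y i) = length (Y' i)" using lenY[OF Y] lenY[OF Y'] by simp
        fix j assume "j < length (Y i)"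
        then have j: "j < N" using lenY[OF Y] by simp
        have "\<Psi> Y j i = \<Psi> Y' j i" using eq by simp
        then show "Y i ! j = Y' i ! j" using j by (simp add: \<Psi>_def)
      qed
    qed
  qed
  have sub: "\<Psi> ` T \<subseteq> PiE {..<N} (\<lambda>_. UNIV)" by (auto simp: \<Psi>_def)
  have "(\<Sum>Y\<in>T. exp (\<Sum>j<N. g (\<lambda>i. Y i ! j))) = (\<Sum>c\<in>\<Psi> ` T. exp (\<Sum>j<N. g (c j)))"
    by (subst sum.reindex[OF inj]) (auto simp: \<Psi>_def intro!: sum.cong)
  also have "\<dots> \<le> (\<Sum>c\<in>PiE {..<N} (\<lambda>_. UNIV). exp (\<Sum>j<N. g (c j)))"
    by (intro sum_mono2 sub) (auto intro: finite_PiE)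
  also have "\<dots> = (\<Sum>c\<in>PiE {..<N} (\<lambda>_. UNIV). \<Prod>j<N. exp (g (c j)))"
    by (simp add: exp_sum)
  also have "\<dots> = (\<Prod>j<N. \<Sum>x\<in>UNIV. exp (g x))"
    by (rule prod_sum_PiE[symmetric]) auto
  also have "\<dots> = (\<Sum>x\<in>UNIV. exp (g x)) ^ N" by simp
  finally show ?thesis unfolding T_def .
qed

lemma sumY_lower:
  fixes g :: "('i::finite \<Rightarrow> 'a::finite) \<Rightarrow> real"
  assumes len: "\<And>i. length (xs i) = N" and szK: "size K = N"
    and marg: "\<And>i. image_mset (\<lambda>x. x i) K = mset (xs i)"
  shows "real (card (permutations_of_multiset K)) * exp (\<Sum>x\<in>UNIV. real (count K x) * g x)
     \<le> (\<Sum>Y\<in>PiE UNIV (\<lambda>i. permutations_of_multiset (mset (xs i))). exp (\<Sum>j<N. g (\<lambda>i. Y i ! j)))"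
proof -
  define T where "T = PiE (UNIV::'i set) (\<lambda>i. permutations_of_multiset (mset (xs i)))"
  define Q where "Q = permutations_of_multiset K"
  define \<Theta> where "\<Theta> = (\<lambda>L::('i \<Rightarrow> 'a) list. \<lambda>i. map (\<lambda>x. x i) L)"
  have lenL: "length L = N" if "L \<in> Q" for L
    using that szK by (metis Q_def permutations_of_multisetD size_mset)
  have inj: "inj_on \<Theta> Q"
  proof (rule inj_onI)
    fix L L' assume L: "L \<in> Q" and L': "L' \<in> Q" and eq: "\<Theta> L = \<Theta> L'"
    show "L = L'"
    proof (rule nth_equalityI)
      show "length L = length L'" using lenL[OF L] lenL[OF L'] by simp
      fix j assume j: "j < length L"
      show "L ! j = L' ! j"
      proof
        fix i
        have "\<Theta> L i ! j = \<Theta> L' i ! j" using eq by simp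
        then show "(L ! j) i = (L' ! j) i" using j lenL[OF L] lenL[OF L'] by (simp add: \<Theta>_def)
      qed
    qed
  qed
  have sub: "\<Theta> ` Q \<subseteq> T"
  proof (rule image_subsetI)
    fix L assume "L \<in> Q"
    then have "mset L = K" by (simp add: Q_def permutations_of_multisetD)
    then show "\<Theta> L \<in> T" using marg by (auto simp: T_def \<Theta>_def intro!: permutations_of_multisetI)
  qed
  have val: "exp (\<Sum>j<N. g (\<lambda>i. \<Theta> L i ! j)) = exp (\<Sum>x\<in>UNIV. real (count K x) * g x)" if "L \<in> Q" for L
  proof -
    have mL: "mset L = K" using that by (simp add: Q_def permutations_of_multisetD)
    have "(\<Sum>j<N. g (\<lambda>i. \<Theta> L i ! j)) = (\<Sum>j<N. g (L ! j))"
      using lenL[OF that] by (intro sum.cong refl) (simp add: \<Theta>_def)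
    also have "\<dots> = sum_list (map g L)"
      using lenL[OF that] by (simp add: sum_list_sum_nth atLeast0LessThan)
    also have "\<dots> = (\<Sum>x\<in>#K. g x)"
      by (simp flip: mL sum_mset_sum_list)
    also have "\<dots> = (\<Sum>x\<in>UNIV. real (count K x) * g x)" by (rule sum_mset_count)
    finally show ?thesis by simp
  qed
  have "real (card Q) * exp (\<Sum>x\<in>UNIV. real (count K x) * g x) = (\<Sum>L\<in>Q. exp (\<Sum>j<N. g (\<lambda>i. \<Theta> L i ! j)))"
    using val by simp
  also have "\<dots> = (\<Sum>Y\<in>\<Theta> ` Q. exp (\<Sum>j<N. g (\<lambda>i. Y i ! j)))"
    by (rule sum.reindex[OF inj, symmetric, unfolded comp_def])
  also have "\<dots> \<le> (\<Sum>Y\<in>T. exp (\<Sum>j<N. g (\<lambda>i. Y i ! j)))"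
    by (intro sum_mono2 sub) (auto simp: T_def intro: finite_PiE)
  finally show ?thesis unfolding T_def Q_def .
qed



lemma size_sum_mset_fin: "finite S \<Longrightarrow> size (\<Sum>x\<in>S. f x) = (\<Sum>x\<in>S. size (f x :: 'b multiset))"
  by (induction S rule: finite_induct) auto

lemma image_mset_sum_rep:
  "finite S \<Longrightarrow> image_mset f (\<Sum>x\<in>S. replicate_mset (m x) x) = (\<Sum>x\<in>S. replicate_mset (m x) (f x))"
  by (induction S rule: finite_induct) auto

lemma construct_K:
  fixes \<gamma> :: "('i::finite \<Rightarrow> 'a::finite) \<Rightarrow> real" and xs :: "'i \<Rightarrow> 'a list"
  assumes len: "\<And>i. length (xs i) = N"
    and prob: "(\<Sum>x\<in>UNIV. \<gamma> x) = 1"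
    and gd: "\<And>x. \<delta> \<le> \<gamma> x" and d0: "0 \<le> \<delta>"
    and cnt: "\<And>i t. real N * (marginal \<gamma> i t - \<delta>) \<le> real (count (mset (xs i)) t)"
  shows "\<exists>K. size K = N \<and> (\<forall>i. image_mset (\<lambda>x. x i) K = mset (xs i)) \<and>
     (\<forall>x. real N * (\<gamma> x - \<delta>) - 1 \<le> real (count K x) \<and>
          real (count K x) \<le> real N * (\<gamma> x - \<delta>) + real N * \<delta> * real CARD('i \<Rightarrow> 'a) + real CARD('i \<Rightarrow> 'a))"
proof -
  define m where "m = (\<lambda>x. nat \<lfloor>real N * (\<gamma> x - \<delta>)\<rfloor>)"
  have nn: "0 \<le> real N * (\<gamma> x - \<delta>)" for x using gd[of x] by simp
  have mle: "real (m x) \<le> real N * (\<gamma> x - \<delta>)" for x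
    using nn[of x] unfolding m_def by (simp add: of_nat_nat)
  have mge: "real N * (\<gamma> x - \<delta>) - 1 \<le> real (m x)" for x
    using nn[of x] unfolding m_def by (simp add: of_nat_nat)
  define A where "A = (\<Sum>x\<in>(UNIV::('i\<Rightarrow>'a) set). replicate_mset (m x) x)"
  have cA: "count A y = m y" for y
    unfolding A_def count_sum by (simp add: sum.delta)
  have sA: "size A = (\<Sum>x\<in>UNIV. m x)" unfolding A_def by (simp add: size_sum_mset_fin)
  define B where "B = (\<lambda>i. image_mset (\<lambda>x. x i) A)"
  have cB: "count (B i) t = (\<Sum>x\<in>{x. x i = t}. m x)" for i t
  proof -
    have "count (B i) t = (\<Sum>x\<in>UNIV. if x i = t then m x else 0)"
      unfolding B_def A_def image_mset_sum_rep[OF finite] count_sum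
      by (intro sum.cong refl) auto
    also have "\<dots> = (\<Sum>x\<in>{x. x i = t}. m x)"
      by (simp add: sum.If_cases)
    finally show ?thesis .
  qed
  have Bsub: "B i \<subseteq># mset (xs i)" for i
  proof (rule mset_subset_eqI)
    fix t
    have ne: "card {x::'i\<Rightarrow>'a. x i = t} \<ge> 1"
    proof -
      have a: "(\<lambda>_. t) \<in> {x::'i\<Rightarrow>'a. x i = t}" by (simp only: mem_Collect_eq)
      have b: "{x::'i\<Rightarrow>'a. x i = t} \<noteq> {}" using a by (metis empty_iff)
      have c: "finite {x::'i\<Rightarrow>'a. x i = t}" by (rule finite)
      have "card {x::'i\<Rightarrow>'a. x i = t} > 0" unfolding card_gt_0_iff using b c by (rule conjI)
      then show ?thesis by linarith
    qed
    have "real (count (B i) t) = (\<Sum>x\<in>{x. x i = t}. real (m x))" by (simp add: cB)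
    also have "\<dots> \<le> (\<Sum>x\<in>{x. x i = t}. real N * (\<gamma> x - \<delta>))" by (intro sum_mono mle)
    also have "\<dots> = real N * (\<Sum>x\<in>{x. x i = t}. \<gamma> x - \<delta>)"
      by (simp add: sum_distrib_left)
    also have "\<dots> = real N * ((\<Sum>x\<in>{x. x i = t}. \<gamma> x) - real (card {x::'i\<Rightarrow>'a. x i = t}) * \<delta>)"
      by (simp only: sum_subtractf sum_constant)
    also have "\<dots> = real N * marginal \<gamma> i t - real N * \<delta> * real (card {x::'i\<Rightarrow>'a. x i = t})"
      by (simp add: marginal_def algebra_simps)
    also have "\<dots> \<le> real N * marginal \<gamma> i t - real N * \<delta>"
    proof -
      have "real N * \<delta> * 1 \<le> real N * \<delta> * real (card {x::'i\<Rightarrow>'a. x i = t})"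
        using ne d0 by (intro mult_left_mono) auto
      then show ?thesis by simp
    qed
    also have "\<dots> \<le> real (count (mset (xs i)) t)" using cnt[of i t] by (simp add: algebra_simps)
    finally show "count (B i) t \<le> count (mset (xs i)) t" by simp
  qed
  have sAN: "size A \<le> N"
  proof -
    have "size (B undefined) \<le> size (mset (xs undefined))" by (rule size_mset_mono[OF Bsub])
    then show ?thesis using len by (simp add: B_def)
  qed
  define D where "D = N - size A"
  define R where "R = (\<lambda>i. mset (xs i) - B i)"
  have sR: "size (R i) = D" for i
    using Bsub[of i] len[of i] by (simp add: R_def D_def size_Diff_submset B_def)
  define r where "r = (\<lambda>i. SOME l. mset l = R i)"
  have mr: "mset (r i) = R i" for i unfolding r_def using ex_mset[of "R i"] by (rule someI_ex)
  have lr: "length (r i) = D" for i using mr[of i] sR[of i] by (metis size_mset)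
  define F where "F = mset (map (\<lambda>j. \<lambda>i. r i ! j) [0..<D])"
  have imF: "image_mset (\<lambda>x. x i) F = R i" for i
  proof -
    have "image_mset (\<lambda>x. x i) F = mset (map (\<lambda>j. r i ! j) [0..<D])" by (simp only: F_def mset_map[symmetric] map_map comp_def)
    also have "map (\<lambda>j. r i ! j) [0..<D] = r i" using lr[of i] map_nth[of "r i"] by simp
    finally show ?thesis using mr by simp
  qed
  have sF: "size F = D" by (simp add: F_def)
  define K where "K = A + F"
  have "size K = N" using sAN by (simp add: K_def sF D_def)
  moreover have "image_mset (\<lambda>x. x i) K = mset (xs i)" for i
  proof -
    have "image_mset (\<lambda>x. x i) K = B i + R i" by (simp add: K_def imF B_def)
    also have "\<dots> = mset (xs i)" unfolding R_def by (rule subset_mset.add_diff_inverse[OF Bsub])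
    finally show ?thesis .
  qed
  moreover have "real N * (\<gamma> x - \<delta>) - 1 \<le> real (count K x) \<and>
          real (count K x) \<le> real N * (\<gamma> x - \<delta>) + real N * \<delta> * real CARD('i \<Rightarrow> 'a) + real CARD('i \<Rightarrow> 'a)" for x
  proof
    show "real N * (\<gamma> x - \<delta>) - 1 \<le> real (count K x)" using mge[of x] by (simp add: K_def cA)
    have cF: "count F x \<le> D" using count_le_size[of F x] sF by simp
    have "real D = real N - (\<Sum>y\<in>UNIV. real (m y))" using sAN by (simp add: D_def sA of_nat_diff)
    also have "\<dots> \<le> real N - (\<Sum>y\<in>UNIV. real N * (\<gamma> y - \<delta>) - 1)"
      by (intro diff_left_mono sum_mono mge)
    also have "\<dots> = real N * \<delta> * real CARD('i \<Rightarrow> 'a) + real CARD('i \<Rightarrow> 'a)"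
      using prob by (simp add: sum_subtractf sum_distrib_left[symmetric] algebra_simps)
    finally have "real D \<le> \<dots>" .
    then show "real (count K x) \<le> real N * (\<gamma> x - \<delta>) + real N * \<delta> * real CARD('i \<Rightarrow> 'a) + real CARD('i \<Rightarrow> 'a)"
      using mle[of x] cF by (simp add: K_def cA)
  qed
  ultimately show ?thesis by blast
qed



lemma count_mset_seq_type:
  assumes "length xs = N" "N > 0"
  shows "real (count (mset xs) t) / real (size (mset xs)) = seq_type xs t"
  using assms by (simp add: seq_type_def count_mset)

lemma count_mset_seq_type':
  assumes "length xs = N" "N > 0"
  shows "real (count (mset xs) t) = real N * seq_type xs t"
  using assms by (simp add: seq_type_def count_mset)

lemma ent_conv:
  fixes p :: "nat \<Rightarrow> 'b::finite \<Rightarrow> real"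
  assumes "\<And>x. (\<lambda>N. p N x) \<longlonglongrightarrow> q x" "\<And>x. q x > 0"
  shows "(\<lambda>N. ent (p N)) \<longlonglongrightarrow> ent q"
  unfolding ent_def using assms
  by (intro tendsto_minus tendsto_sum tendsto_mult tendsto_ln) (auto simp: less_imp_neq[symmetric])

lemma lnN_conv: "(\<lambda>N. (ln (real N + 1) + 1) / real N) \<longlonglongrightarrow> 0"
  by real_asymp

lemma marginal_pos:
  assumes "\<And>x. \<gamma> x > 0"
  shows "marginal \<gamma> i t > 0"
proof -
  have "\<gamma> (\<lambda>_. t) \<le> marginal \<gamma> i t"
    unfolding marginal_def by (rule member_le_sum) (auto intro: less_imp_le assms)
  moreover have "\<gamma> (\<lambda>_. t) > 0" by (rule assms)
  ultimately show ?thesis by linarith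
qed

lemma SY_pos:
  fixes g :: "('i::finite \<Rightarrow> 'a::finite) \<Rightarrow> real"
  shows "(\<Sum>Y\<in>PiE UNIV (\<lambda>i. permutations_of_multiset (mset (xs i))). exp (\<Sum>j<N. g (\<lambda>i. Y i ! j))) > 0"
proof (rule sum_pos)
  show "finite (PiE UNIV (\<lambda>i. permutations_of_multiset (mset (xs i))))" by (intro finite_PiE) auto
  show "PiE UNIV (\<lambda>i. permutations_of_multiset (mset (xs i))) \<noteq> {}" by (simp add: PiE_eq_empty_iff)
qed simp

lemma prodC_pos: "(\<Prod>i\<in>UNIV. real (card (permutations_of_multiset (mset (xs i))))) > 0"
  by (intro prod_pos) (simp add: card_gt_0_iff)

lemma ln_sym_split:
  fixes g :: "('i::finite \<Rightarrow> 'a::finite) \<Rightarrow> real"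
  assumes len: "\<And>i. length (\<xi> N i) = N"
  shows "ln (sym_partition g \<xi> N) =
    ln (\<Sum>Y\<in>PiE UNIV (\<lambda>i. permutations_of_multiset (mset (\<xi> N i))). exp (\<Sum>j<N. g (\<lambda>i. Y i ! j)))
    - (\<Sum>i\<in>UNIV. ln (real (card (permutations_of_multiset (mset (\<xi> N i))))))"
proof -
  have "ln (\<Prod>i\<in>UNIV. real (card (permutations_of_multiset (mset (\<xi> N i))))) =
        (\<Sum>i\<in>UNIV. ln (real (card (permutations_of_multiset (mset (\<xi> N i))))))"
    by (rule ln_prod) (simp_all add: card_gt_0_iff)
  then show ?thesis
    using SY_pos[where xs = "\<xi> N" and N = N and g = g] prodC_pos[where xs = "\<xi> N"]
    by (simp add: sym_partition_eq[where \<xi> = \<xi> and N = N, OF len] ln_div)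
qed



lemma Limsup_le_lim:
  assumes "eventually (\<lambda>N. a N \<le> u N) sequentially" "u \<longlonglongrightarrow> U"
  shows "Limsup sequentially (\<lambda>N. ereal (a N)) \<le> ereal U"
proof -
  have "Limsup sequentially (\<lambda>N. ereal (a N)) \<le> Limsup sequentially (\<lambda>N. ereal (u N))"
    using assms(1) by (intro Limsup_mono) (auto elim: eventually_mono)
  also have "\<dots> = ereal U"
    using assms(2) by (intro lim_imp_Limsup) (auto intro: tendsto_ereal)
  finally show ?thesis .
qed

lemma lim_le_Limsup:
  assumes "eventually (\<lambda>N. l N \<le> a N) sequentially" "l \<longlonglongrightarrow> L"
  shows "ereal L \<le> Limsup sequentially (\<lambda>N. ereal (a N))"
proof -
  have "ereal L = Limsup sequentially (\<lambda>N. ereal (l N))"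
    using assms(2) by (intro lim_imp_Limsup[symmetric]) (auto intro: tendsto_ereal)
  also have "\<dots> \<le> Limsup sequentially (\<lambda>N. ereal (a N))"
    using assms(1) by (intro Limsup_mono) (auto elim: eventually_mono)
  finally show ?thesis .
qed

lemma ln_card_xi_lower:
  assumes "length xs = N" "N > 0"
  shows "real N * ent (seq_type xs) - real CARD('a::finite) * (ln (real N + 1) + 1)
     \<le> ln (real (card (permutations_of_multiset (mset (xs :: 'a list)))))"
proof -
  have s: "size (mset xs) = N" using assms by simp
  have e: "(\<lambda>x. real (count (mset xs) x) / real N) = seq_type xs"
    using count_mset_seq_type[OF assms] s by (simp add: fun_eq_iff)
  show ?thesis using ln_card_pmset_lower[of "mset xs"] assms by (simp add: s e)
qed

lemma ln_card_xi_upper: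
  assumes "length xs = N" "N > 0"
  shows "ln (real (card (permutations_of_multiset (mset (xs :: 'a::finite list)))))
     \<le> real N * ent (seq_type xs) + ln (real N + 1) + 1"
proof -
  have s: "size (mset xs) = N" using assms by simp
  have e: "(\<lambda>x. real (count (mset xs) x) / real N) = seq_type xs"
    using count_mset_seq_type[OF assms] s by (simp add: fun_eq_iff)
  show ?thesis using ln_card_pmset_upper[of "mset xs"] assms by (simp add: s e)
qed

lemma Psym_upper_seq:
  fixes g :: "('i::finite \<Rightarrow> 'a::{finite,linorder}) \<Rightarrow> real"
  assumes ap: "approx_seq \<xi> M" and Mpos: "\<And>i t. M i t > 0"
  shows "Limsup sequentially (\<lambda>N. ereal (ln (sym_partition g \<xi> N) / real N))
      \<le> ereal (pressure g - (\<Sum>i\<in>UNIV. ent (M i)))"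
proof -
  from ap have len: "\<And>N i. length (\<xi> N i) = N" and conv: "\<And>i t. (\<lambda>N. seq_type (\<xi> N i) t) \<longlonglongrightarrow> M i t"
    by (auto simp: approx_seq_def)
  define u where "u N = pressure g - (\<Sum>i\<in>UNIV. ent (seq_type (\<xi> N i)))
      + real CARD('i) * real CARD('a) * ((ln (real N + 1) + 1) / real N)" for N
  have "(\<lambda>N. pressure g - (\<Sum>i\<in>UNIV. ent (seq_type (\<xi> N i)))
      + real CARD('i) * real CARD('a) * ((ln (real N + 1) + 1) / real N))
     \<longlonglongrightarrow> pressure g - (\<Sum>i\<in>UNIV. ent (M i)) + real CARD('i) * real CARD('a) * 0"
    by (intro tendsto_add tendsto_diff tendsto_const tendsto_sum tendsto_mult lnN_conv ent_conv conv Mpos)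
  then have ucon: "u \<longlonglongrightarrow> pressure g - (\<Sum>i\<in>UNIV. ent (M i))" by (simp add: u_def[abs_def])
  have le: "ln (sym_partition g \<xi> N) / real N \<le> u N" if N: "N > 0" for N
  proof -
    define SY where "SY = (\<Sum>Y\<in>PiE UNIV (\<lambda>i. permutations_of_multiset (mset (\<xi> N i))). exp (\<Sum>j<N. g (\<lambda>i. Y i ! j)))"
    have SYp: "SY > 0" unfolding SY_def by (rule SY_pos)
    have Zp: "(\<Sum>x\<in>UNIV. exp (g x)) > 0" by (intro sum_pos) auto
    have "ln SY \<le> ln ((\<Sum>x\<in>UNIV. exp (g x)) ^ N)"
      using SYp sumY_upper[where xs = "\<xi> N" and N = N and g = g, OF len] by (simp add: SY_def)
    also have "\<dots> = real N * pressure g" using Zp by (simp add: ln_realpow pressure_def)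
    finally have a: "ln SY \<le> real N * pressure g" .
    have b: "(\<Sum>i\<in>UNIV. real N * ent (seq_type (\<xi> N i)) - real CARD('a) * (ln (real N + 1) + 1))
        \<le> (\<Sum>i\<in>UNIV. ln (real (card (permutations_of_multiset (mset (\<xi> N i))))))"
      by (intro sum_mono ln_card_xi_lower len N)
    have c: "(\<Sum>i\<in>UNIV. real N * ent (seq_type (\<xi> N i)) - real CARD('a) * (ln (real N + 1) + 1))
        = real N * (\<Sum>i\<in>UNIV. ent (seq_type (\<xi> N i))) - real CARD('i) * real CARD('a) * (ln (real N + 1) + 1)"
      by (simp add: sum_subtractf sum_distrib_left)
    have "ln (sym_partition g \<xi> N) \<le> real N * pressure g - (real N * (\<Sum>i\<in>UNIV. ent (seq_type (\<xi> N i)))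
        - real CARD('i) * real CARD('a) * (ln (real N + 1) + 1))"
      using ln_sym_split[where \<xi> = \<xi> and N = N and g = g, OF len] a b c unfolding SY_def by linarith
    also have "\<dots> = real N * u N" using N by (simp add: u_def field_simps)
    finally show ?thesis using N by (simp add: field_simps)
  qed
  show ?thesis
    by (rule Limsup_le_lim[OF _ ucon]) (auto intro: le simp: eventually_at_top_linorder intro!: exI[of _ 1])
qed



lemma Psym_lower_seq:
  fixes g :: "('i::finite \<Rightarrow> 'a::{finite,linorder}) \<Rightarrow> real"
  assumes ap: "approx_seq \<xi> M" and gp: "is_prob \<gamma>" and gpos: "\<And>x. \<gamma> x > 0"
    and mg: "\<And>i t. marginal \<gamma> i t = M i t"
  shows "ereal (integ \<gamma> g + ent \<gamma> - (\<Sum>i\<in>UNIV. ent (M i)))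
     \<le> Limsup sequentially (\<lambda>N. ereal (ln (sym_partition g \<xi> N) / real N))"
proof -
  from ap have len: "\<And>N i. length (\<xi> N i) = N" and conv: "\<And>i t. (\<lambda>N. seq_type (\<xi> N i) t) \<longlonglongrightarrow> M i t"
    by (auto simp: approx_seq_def)
  have Mpos: "M i t > 0" for i t using marginal_pos[of \<gamma> i t] gpos mg by simp
  have gsum: "(\<Sum>x\<in>UNIV. \<gamma> x) = 1" using gp by (simp add: is_prob_def)
  define C where "C = real CARD('i \<Rightarrow> 'a)"
  define \<delta> where "\<delta> N = (\<Sum>i\<in>UNIV. \<Sum>t\<in>UNIV. \<bar>seq_type (\<xi> N i) t - M i t\<bar>)" for N
  have \<delta>0: "\<delta> N \<ge> 0" for N unfolding \<delta>_def by (intro sum_nonneg) auto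
  have \<delta>le: "\<bar>seq_type (\<xi> N i) t - M i t\<bar> \<le> \<delta> N" for N i t
  proof -
    have "\<bar>seq_type (\<xi> N i) t - M i t\<bar> \<le> (\<Sum>t\<in>UNIV. \<bar>seq_type (\<xi> N i) t - M i t\<bar>)"
      by (rule member_le_sum) auto
    also have "\<dots> \<le> \<delta> N" unfolding \<delta>_def
      by (rule member_le_sum[where f = "\<lambda>i. \<Sum>t\<in>UNIV. \<bar>seq_type (\<xi> N i) t - M i t\<bar>"])
         (auto intro: sum_nonneg)
    finally show ?thesis .
  qed
  have \<delta>conv: "\<delta> \<longlonglongrightarrow> 0"
  proof -
    have "(\<lambda>N. \<Sum>i\<in>UNIV. \<Sum>t\<in>UNIV. \<bar>seq_type (\<xi> N i) t - M i t\<bar>) \<longlonglongrightarrow> (\<Sum>i\<in>(UNIV::'i set). \<Sum>t\<in>(UNIV::'a set). \<bar>M i t - M i t\<bar>)"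
      by (intro tendsto_sum tendsto_rabs tendsto_diff conv tendsto_const)
    then show ?thesis by (simp add: \<delta>_def[abs_def])
  qed
  define gmin where "gmin = Min (range \<gamma>)"
  have gmin_le: "gmin \<le> \<gamma> x" for x unfolding gmin_def by (rule Min_le) auto
  have gmin_pos: "gmin > 0" unfolding gmin_def using gpos by (subst Min_gr_iff) auto
  define E where "E N \<longleftrightarrow> N > 0 \<and> \<delta> N \<le> gmin" for N
  have evE: "eventually E sequentially"
  proof -
    have "eventually (\<lambda>N. \<delta> N < gmin) sequentially" using order_tendstoD(2)[OF \<delta>conv gmin_pos] .
    moreover have "eventually (\<lambda>N. N > (0::nat)) sequentially" by (rule eventually_gt_at_top)
    ultimately show ?thesis by eventually_elim (auto simp: E_def)
  qed
  define PR where "PR N K \<longleftrightarrow> size K = N \<and> (\<forall>i. image_mset (\<lambda>x. x i) K = mset (\<xi> N i)) \<and>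
     (\<forall>x. real N * (\<gamma> x - \<delta> N) - 1 \<le> real (count K x) \<and>
          real (count K x) \<le> real N * (\<gamma> x - \<delta> N) + real N * \<delta> N * C + C)" for N K
  define K where "K N = (SOME K. PR N K)" for N
  have propK: "PR N (K N)" if "E N" for N
  proof -
    have "\<exists>K. PR N K" unfolding PR_def C_def
    proof (rule construct_K)
      show "length (\<xi> N i) = N" for i by (rule len)
      show "(\<Sum>x\<in>UNIV. \<gamma> x) = 1" by (rule gsum)
      show "\<delta> N \<le> \<gamma> x" for x using that gmin_le[of x] by (auto simp: E_def)
      show "0 \<le> \<delta> N" by (rule \<delta>0)
      show "real N * (marginal \<gamma> i t - \<delta> N) \<le> real (count (mset (\<xi> N i)) t)" for i t
      proof -
        have "M i t - \<delta> N \<le> seq_type (\<xi> N i) t" using \<delta>le[of N i t] by linarith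
        then have "real N * (M i t - \<delta> N) \<le> real N * seq_type (\<xi> N i) t" by (intro mult_left_mono) auto
        then show ?thesis using count_mset_seq_type'[OF len, of N i t] that mg by (auto simp: E_def)
      qed
    qed
    then show ?thesis unfolding K_def by (rule someI_ex)
  qed
  define \<kappa> where "\<kappa> N x = real (count (K N) x) / real N" for N x
  have \<kappa>conv: "(\<lambda>N. \<kappa> N x) \<longlonglongrightarrow> \<gamma> x" for x
  proof (rule tendsto_sandwich)
    show "eventually (\<lambda>N. \<gamma> x - \<delta> N - 1 / real N \<le> \<kappa> N x) sequentially"
      using evE
    proof eventually_elim
      case (elim N)
      then have N: "real N > 0" by (simp add: E_def)
      have "real N * (\<gamma> x - \<delta> N) - 1 \<le> real (count (K N) x)" using propK[OF elim] by (simp add: PR_def)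
      then have "(real N * (\<gamma> x - \<delta> N) - 1) / real N \<le> real (count (K N) x) / real N"
        using N by (intro divide_right_mono) auto
      moreover have "(real N * (\<gamma> x - \<delta> N) - 1) / real N = \<gamma> x - \<delta> N - 1 / real N"
        using N by (simp add: field_simps)
      ultimately show ?case by (simp add: \<kappa>_def)
    qed
    show "eventually (\<lambda>N. \<kappa> N x \<le> \<gamma> x - \<delta> N + \<delta> N * C + C / real N) sequentially"
      using evE
    proof eventually_elim
      case (elim N)
      then have N: "real N > 0" by (simp add: E_def)
      have "real (count (K N) x) \<le> real N * (\<gamma> x - \<delta> N) + real N * \<delta> N * C + C" using propK[OF elim] by (simp add: PR_def)
      then have "real (count (K N) x) / real N \<le> (real N * (\<gamma> x - \<delta> N) + real N * \<delta> N * C + C) / real N"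
        using N by (intro divide_right_mono) auto
      moreover have "(real N * (\<gamma> x - \<delta> N) + real N * \<delta> N * C + C) / real N = \<gamma> x - \<delta> N + \<delta> N * C + C / real N"
        using N by (simp add: field_simps)
      ultimately show ?case by (simp add: \<kappa>_def)
    qed
    have "(\<lambda>N. \<gamma> x - \<delta> N - 1 / real N) \<longlonglongrightarrow> \<gamma> x - 0 - 0"
      by (intro tendsto_diff tendsto_const \<delta>conv lim_inverse_n')
    then show "(\<lambda>N. \<gamma> x - \<delta> N - 1 / real N) \<longlonglongrightarrow> \<gamma> x" by simp
    have Cn: "(\<lambda>N. C / real N) \<longlonglongrightarrow> 0" by real_asymp
    have "(\<lambda>N. \<gamma> x - \<delta> N + \<delta> N * C + C / real N) \<longlonglongrightarrow> \<gamma> x - 0 + 0 * C + 0"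
      by (intro tendsto_add tendsto_diff tendsto_const \<delta>conv tendsto_mult Cn)
    then show "(\<lambda>N. \<gamma> x - \<delta> N + \<delta> N * C + C / real N) \<longlonglongrightarrow> \<gamma> x" by simp
  qed
  define l where "l N = ent (\<kappa> N) - C * ((ln (real N + 1) + 1) / real N) + (\<Sum>x\<in>UNIV. \<kappa> N x * g x)
      - (\<Sum>i\<in>UNIV. ent (seq_type (\<xi> N i))) - real CARD('i) * ((ln (real N + 1) + 1) / real N)" for N
  have "(\<lambda>N. ent (\<kappa> N) - C * ((ln (real N + 1) + 1) / real N) + (\<Sum>x\<in>UNIV. \<kappa> N x * g x)
      - (\<Sum>i\<in>UNIV. ent (seq_type (\<xi> N i))) - real CARD('i) * ((ln (real N + 1) + 1) / real N))
     \<longlonglongrightarrow> ent \<gamma> - C * 0 + (\<Sum>x\<in>UNIV. \<gamma> x * g x) - (\<Sum>i\<in>UNIV. ent (M i)) - real CARD('i) * 0"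
    by (intro tendsto_add tendsto_diff tendsto_const tendsto_sum tendsto_mult lnN_conv ent_conv conv Mpos
        \<kappa>conv gpos)
  note tend = this
  have lim_eq: "ent \<gamma> - C * 0 + (\<Sum>x\<in>UNIV. \<gamma> x * g x) - (\<Sum>i\<in>UNIV. ent (M i)) - real CARD('i) * 0
      = integ \<gamma> g + ent \<gamma> - (\<Sum>i\<in>UNIV. ent (M i))"
    unfolding integ_def by (simp add: mult.commute)
  have lconv: "l \<longlonglongrightarrow> integ \<gamma> g + ent \<gamma> - (\<Sum>i\<in>UNIV. ent (M i))"
    unfolding l_def[abs_def] using tend[unfolded lim_eq] .
  have le: "l N \<le> ln (sym_partition g \<xi> N) / real N" if EN: "E N" for N
  proof -
    have N: "N > 0" using EN by (simp add: E_def)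
    have pK: "PR N (K N)" by (rule propK[OF EN])
    have sK: "size (K N) = N" and mK: "\<And>i. image_mset (\<lambda>x. x i) (K N) = mset (\<xi> N i)"
      using pK by (auto simp: PR_def)
    define SY where "SY = (\<Sum>Y\<in>PiE UNIV (\<lambda>i. permutations_of_multiset (mset (\<xi> N i))). exp (\<Sum>j<N. g (\<lambda>i. Y i ! j)))"
    define cK where "cK = real (card (permutations_of_multiset (K N)))"
    have cKp: "cK > 0" unfolding cK_def by (simp add: card_gt_0_iff)
    have "cK * exp (\<Sum>x\<in>UNIV. real (count (K N) x) * g x) \<le> SY"
      unfolding cK_def SY_def by (rule sumY_lower[OF len sK mK])
    then have "ln (cK * exp (\<Sum>x\<in>UNIV. real (count (K N) x) * g x)) \<le> ln SY"
      using cKp by (intro ln_mono) auto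
    then have a: "ln cK + (\<Sum>x\<in>UNIV. real (count (K N) x) * g x) \<le> ln SY"
      using cKp by (simp add: ln_mult)
    have ek: "(\<lambda>x. real (count (K N) x) / real (size (K N))) = \<kappa> N"
      using sK by (simp add: \<kappa>_def fun_eq_iff)
    have b: "real N * ent (\<kappa> N) - C * (ln (real N + 1) + 1) \<le> ln cK"
      using ln_card_pmset_lower[of "K N"] N sK unfolding cK_def C_def ek by simp
    have c: "(\<Sum>x\<in>UNIV. real (count (K N) x) * g x) = real N * (\<Sum>x\<in>UNIV. \<kappa> N x * g x)"
      using N by (simp add: \<kappa>_def sum_distrib_left)
    have d: "(\<Sum>i\<in>UNIV. ln (real (card (permutations_of_multiset (mset (\<xi> N i))))))
        \<le> (\<Sum>i\<in>UNIV. real N * ent (seq_type (\<xi> N i)) + ln (real N + 1) + 1)"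
      by (intro sum_mono ln_card_xi_upper len N)
    have e: "(\<Sum>i\<in>UNIV. real N * ent (seq_type (\<xi> N i)) + ln (real N + 1) + 1)
        = real N * (\<Sum>i\<in>UNIV. ent (seq_type (\<xi> N i))) + real CARD('i) * (ln (real N + 1) + 1)"
      by (simp add: sum.distrib sum_distrib_left algebra_simps)
    have "real N * l N = real N * ent (\<kappa> N) - C * (ln (real N + 1) + 1) + real N * (\<Sum>x\<in>UNIV. \<kappa> N x * g x)
      - (real N * (\<Sum>i\<in>UNIV. ent (seq_type (\<xi> N i))) + real CARD('i) * (ln (real N + 1) + 1))"
      using N by (simp add: l_def field_simps)
    also have "\<dots> \<le> ln (sym_partition g \<xi> N)"
      using ln_sym_split[where \<xi> = \<xi> and N = N and g = g, OF len] a b c d e unfolding SY_def by linarith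
    finally show ?thesis using N by (simp add: field_simps)
  qed
  show ?thesis
    by (rule lim_le_Limsup[OF _ lconv]) (rule eventually_mono[OF evE le])
qed



lemma floor_frac_conv:
  assumes "(m::real) \<ge> 0"
  shows "(\<lambda>N. real (nat \<lfloor>real N * m\<rfloor>) / real N) \<longlonglongrightarrow> m"
proof (rule tendsto_sandwich)
  have nn: "real N * m \<ge> 0" for N using assms by simp
  show "eventually (\<lambda>N. m - 1 / real N \<le> real (nat \<lfloor>real N * m\<rfloor>) / real N) sequentially"
    using eventually_gt_at_top[of "0::nat"]
  proof eventually_elim
    case (elim N)
    have "real N * m - 1 \<le> real (nat \<lfloor>real N * m\<rfloor>)" using nn[of N] by (simp add: of_nat_nat)
    then have "(real N * m - 1) / real N \<le> real (nat \<lfloor>real N * m\<rfloor>) / real N"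
      using elim by (intro divide_right_mono) auto
    then show ?case using elim by (simp add: field_simps)
  qed
  show "eventually (\<lambda>N. real (nat \<lfloor>real N * m\<rfloor>) / real N \<le> m) sequentially"
    using eventually_gt_at_top[of "0::nat"]
  proof eventually_elim
    case (elim N)
    have "real (nat \<lfloor>real N * m\<rfloor>) \<le> real N * m" using nn[of N] by (simp add: of_nat_nat)
    then have "real (nat \<lfloor>real N * m\<rfloor>) / real N \<le> real N * m / real N"
      using elim by (intro divide_right_mono) auto
    then show ?case using elim by simp
  qed
  have "(\<lambda>N. m - 1 / real N) \<longlonglongrightarrow> m - 0" by (intro tendsto_diff tendsto_const lim_inverse_n')
  then show "(\<lambda>N. m - 1 / real N) \<longlonglongrightarrow> m" by simp
qed simp

lemma approx_exists:
  fixes M :: "'i \<Rightarrow> 'a::{finite,linorder} \<Rightarrow> real"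
  assumes nn: "\<And>i t. M i t \<ge> 0" and s1: "\<And>i. (\<Sum>t\<in>UNIV. M i t) = 1"
  shows "\<exists>\<xi>. approx_seq \<xi> M"
proof -
  define t0 :: 'a where "t0 = undefined"
  define f where "f N i s = nat \<lfloor>real N * M i s\<rfloor>" for N i s
  have fle: "real (f N i s) \<le> real N * M i s" for N i s using nn[of i s] by (simp add: f_def of_nat_nat)
  have sfle: "(\<Sum>s\<in>-{t0}. f N i s) \<le> N" for N i
  proof -
    have "real (\<Sum>s\<in>-{t0}. f N i s) = (\<Sum>s\<in>-{t0}. real (f N i s))" by simp
    also have "\<dots> \<le> (\<Sum>s\<in>-{t0}. real N * M i s)" by (intro sum_mono fle)
    also have "\<dots> \<le> (\<Sum>s\<in>UNIV. real N * M i s)" using nn by (intro sum_mono2) auto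
    also have "\<dots> = real N" using s1[of i] by (simp add: sum_distrib_left[symmetric])
    finally show ?thesis by linarith
  qed
  define c where "c N i t = (if t = t0 then N - (\<Sum>s\<in>-{t0}. f N i s) else f N i t)" for N i t
  have sumc: "(\<Sum>t\<in>UNIV. c N i t) = N" for N i
  proof -
    have "(\<Sum>t\<in>UNIV. c N i t) = c N i t0 + (\<Sum>t\<in>-{t0}. c N i t)"
      by (subst sum.remove[of UNIV t0]) (auto simp: Compl_eq_Diff_UNIV)
    also have "(\<Sum>t\<in>-{t0}. c N i t) = (\<Sum>t\<in>-{t0}. f N i t)" by (intro sum.cong) (auto simp: c_def)
    finally show ?thesis using sfle[of N i] by (simp add: c_def)
  qed
  define A where "A N i = (\<Sum>t\<in>UNIV. replicate_mset (c N i t) t)" for N i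
  have cA: "count (A N i) t = c N i t" for N i t unfolding A_def count_sum by (simp add: sum.delta)
  have sA: "size (A N i) = N" for N i unfolding A_def by (simp add: size_sum_mset_fin sumc)
  define \<xi> where "\<xi> N i = sorted_list_of_multiset (A N i)" for N i
  have len: "length (\<xi> N i) = N" for N i
    by (metis \<xi>_def mset_sorted_list_of_multiset sA size_mset)
  have st: "seq_type (\<xi> N i) t = real (c N i t) / real N" for N i t
  proof -
    have "count_list (\<xi> N i) t = c N i t" by (simp add: count_mset[symmetric] \<xi>_def cA)
    then show ?thesis by (simp add: seq_type_def len)
  qed
  have conv: "(\<lambda>N. seq_type (\<xi> N i) t) \<longlonglongrightarrow> M i t" for i t
  proof (cases "t = t0")
    case False
    have "(\<lambda>N. real (f N i t) / real N) \<longlonglongrightarrow> M i t" unfolding f_def by (rule floor_frac_conv[OF nn])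
    moreover have "real (f N i t) / real N = seq_type (\<xi> N i) t" for N using False by (simp add: st c_def)
    ultimately show ?thesis by simp
  next
    case True
    have "(\<lambda>N. 1 - (\<Sum>s\<in>-{t0}. real (f N i s) / real N)) \<longlonglongrightarrow> 1 - (\<Sum>s\<in>-{t0}. M i s)"
      unfolding f_def by (intro tendsto_diff tendsto_const tendsto_sum floor_frac_conv nn)
    moreover have "1 - (\<Sum>s\<in>-{t0}. M i s) = M i t"
    proof -
      have "(\<Sum>s\<in>UNIV. M i s) = M i t0 + (\<Sum>s\<in>-{t0}. M i s)"
        by (subst sum.remove[of UNIV t0]) (auto simp: Compl_eq_Diff_UNIV)
      then show ?thesis using s1[of i] True by simp
    qed
    moreover have "eventually (\<lambda>N. 1 - (\<Sum>s\<in>-{t0}. real (f N i s) / real N) = seq_type (\<xi> N i) t) sequentially"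
      using eventually_gt_at_top[of "0::nat"]
    proof eventually_elim
      case (elim N)
      have "real (c N i t) = real N - (\<Sum>s\<in>-{t0}. real (f N i s))"
        using True sfle[of N i] by (simp add: c_def of_nat_diff)
      then have "real (c N i t) / real N = 1 - (\<Sum>s\<in>-{t0}. real (f N i s)) / real N"
        using elim by (simp add: diff_divide_distrib)
      also have "(\<Sum>s\<in>-{t0}. real (f N i s)) / real N = (\<Sum>s\<in>-{t0}. real (f N i s) / real N)"
        by (rule sum_divide_distrib)
      finally show ?case by (simp add: st)
    qed
    ultimately show ?thesis using Lim_transform_eventually by fastforce
  qed
  have "approx_seq \<xi> M" unfolding approx_seq_def using len conv by (auto simp: \<xi>_def)
  then show ?thesis by blast
qed



lemma sum_marginal_group:
  fixes f :: "('i::finite \<Rightarrow> 'a::finite) \<Rightarrow> real"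
  shows "(\<Sum>t\<in>UNIV. \<Sum>x\<in>{x. x i = t}. f x) = (\<Sum>x\<in>UNIV. f x)"
  using sum.group[of "UNIV::('i\<Rightarrow>'a) set" "UNIV::'a set" "\<lambda>x. x i" f] by simp

lemma Z_pos: "(\<Sum>x\<in>UNIV. exp ((h :: 'b::finite \<Rightarrow> real) x)) > 0"
  by (intro sum_pos) auto

lemma gibbs_alt: "gibbs h x = exp (h x) / (\<Sum>y\<in>UNIV. exp (h y))"
  using Z_pos[of h] by (simp add: gibbs_def pressure_def exp_diff)

lemma gibbs_pos: "gibbs h x > 0" by (simp add: gibbs_def)

lemma gibbs_prob: "is_prob (gibbs (h :: 'b::finite \<Rightarrow> real))"
  unfolding is_prob_def
proof
  show "\<forall>x. 0 \<le> gibbs h x" by (simp add: gibbs_def)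
  show "(\<Sum>x\<in>UNIV. gibbs h x) = 1"
    using Z_pos[of h] by (simp add: gibbs_alt sum_divide_distrib[symmetric])
qed

lemma gibbs_marginal:
  fixes h :: "('i::finite \<Rightarrow> 'a::finite) \<Rightarrow> real"
  shows "marginal (gibbs h) i = gibbs (hmarg h i)"
proof
  fix t
  have Sp: "(\<Sum>x\<in>{x. x i = s}. exp (h x)) > 0" for s
  proof (rule sum_pos)
    show "{x::'i\<Rightarrow>'a. x i = s} \<noteq> {}"
    proof -
      have "(\<lambda>_. s) \<in> {x::'i\<Rightarrow>'a. x i = s}" by (simp only: mem_Collect_eq)
      then show ?thesis by (metis empty_iff)
    qed
  qed auto
  have "(\<Sum>s\<in>UNIV. exp (hmarg h i s)) = (\<Sum>s\<in>UNIV. \<Sum>x\<in>{x. x i = s}. exp (h x))"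
    using Sp by (simp add: hmarg_def)
  also have "\<dots> = (\<Sum>x\<in>UNIV. exp (h x))" by (rule sum_marginal_group)
  finally have Zeq: "(\<Sum>s\<in>UNIV. exp (hmarg h i s)) = (\<Sum>x\<in>UNIV. exp (h x))" .
  have "marginal (gibbs h) i t = (\<Sum>x\<in>{x. x i = t}. exp (h x)) / (\<Sum>y\<in>UNIV. exp (h y))"
    by (simp add: marginal_def gibbs_alt sum_divide_distrib)
  also have "\<dots> = exp (hmarg h i t) / (\<Sum>s\<in>UNIV. exp (hmarg h i s))"
  proof -
    have ex: "exp (hmarg h i s) = (\<Sum>x\<in>{x. x i = s}. exp (h x))" for s using Sp[of s] by (simp add: hmarg_def)
    show ?thesis by (simp only: ex sum_marginal_group)
  qed
  also have "\<dots> = gibbs (hmarg h i) t" by (simp add: gibbs_alt)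
  finally show "marginal (gibbs h) i t = gibbs (hmarg h i) t" .
qed

lemma gibbs_ent: "integ (gibbs h) h + ent (gibbs h) = pressure (h :: 'b::finite \<Rightarrow> real)"
proof -
  have s1: "(\<Sum>x\<in>UNIV. gibbs h x) = 1" using gibbs_prob[of h] by (simp add: is_prob_def)
  have "ent (gibbs h) = - (\<Sum>x\<in>UNIV. gibbs h x * (h x - pressure h))"
    by (simp add: ent_def gibbs_def)
  also have "\<dots> = pressure h * (\<Sum>x\<in>UNIV. gibbs h x) - (\<Sum>x\<in>UNIV. h x * gibbs h x)"
    by (simp add: algebra_simps sum_subtractf sum_distrib_left)
  finally show ?thesis using s1 by (simp add: integ_def)
qed

lemma gibbs_unique:
  fixes \<mu> h :: "'b::finite \<Rightarrow> real"
  assumes pr: "is_prob \<mu>" and opt: "\<And>g. integ \<mu> g - pressure g \<le> integ \<mu> h - pressure h"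
  shows "\<mu> = gibbs h"
proof -
  define \<gamma> where "\<gamma> = gibbs h"
  define Z where "Z = (\<Sum>x\<in>UNIV. exp (h x))"
  have Zp: "Z > 0" unfolding Z_def by (rule Z_pos)
  have \<gamma>y: "\<gamma> y = exp (h y) / Z" for y by (simp add: \<gamma>_def Z_def gibbs_alt)
  have \<gamma>s: "(\<Sum>x\<in>UNIV. \<gamma> x) = 1" using gibbs_prob[of h] by (simp add: is_prob_def \<gamma>_def)
  have \<mu>s: "(\<Sum>x\<in>UNIV. \<mu> x) = 1" and \<mu>n: "\<And>x. \<mu> x \<ge> 0" using pr by (auto simp: is_prob_def)
  have \<gamma>le1: "\<gamma> y \<le> 1" for y
  proof -
    have "\<gamma> y \<le> (\<Sum>x\<in>UNIV. \<gamma> x)" by (rule member_le_sum) (auto simp: \<gamma>_def gibbs_def)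
    then show ?thesis using \<gamma>s by simp
  qed
  have step: "\<mu> y \<le> (1 + \<epsilon>) * \<gamma> y" if e: "0 < \<epsilon>" "\<epsilon> \<le> 1" for y \<epsilon>
  proof -
    define g where "g x = h x + (if x = y then \<epsilon> else 0)" for x
    have "integ \<mu> g = (\<Sum>x\<in>UNIV. h x * \<mu> x + (if x = y then \<epsilon> * \<mu> x else 0))"
      unfolding integ_def by (intro sum.cong refl) (simp add: g_def algebra_simps)
    also have "\<dots> = integ \<mu> h + \<epsilon> * \<mu> y" by (simp add: sum.distrib integ_def)
    finally have ig: "integ \<mu> g = integ \<mu> h + \<epsilon> * \<mu> y" .
    define w where "w = exp (h y) * (exp \<epsilon> - 1)"
    have w0: "w \<ge> 0" using e by (simp add: w_def)
    have "(\<Sum>x\<in>UNIV. exp (g x)) = (\<Sum>x\<in>UNIV. exp (h x) + (if x = y then w else 0))"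
      by (intro sum.cong refl) (auto simp: g_def w_def exp_add algebra_simps)
    also have "\<dots> = Z + w" by (simp add: sum.distrib Z_def)
    finally have Zg: "(\<Sum>x\<in>UNIV. exp (g x)) = Z + w" .
    have "pressure g - pressure h = ln (Z + w) - ln Z" by (simp add: pressure_def Zg Z_def)
    also have "\<dots> = ln ((Z + w) / Z)" using Zp w0 by (simp add: ln_div)
    also have "\<dots> = ln (1 + w / Z)" using Zp by (simp add: field_simps)
    also have "\<dots> \<le> w / Z" using Zp w0 by (intro ln_add_one_self_le_self) simp
    also have "w / Z = \<gamma> y * (exp \<epsilon> - 1)" by (simp add: w_def \<gamma>y)
    also have "\<dots> \<le> \<gamma> y * (\<epsilon> + \<epsilon>\<^sup>2)"
      using exp_bound[of \<epsilon>] e by (intro mult_left_mono) (auto simp: \<gamma>_def gibbs_def)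
    finally have a: "pressure g - pressure h \<le> \<gamma> y * (\<epsilon> + \<epsilon>\<^sup>2)" .
    have "\<epsilon> * \<mu> y \<le> pressure g - pressure h" using opt[of g] ig by simp
    with a have "\<epsilon> * \<mu> y \<le> \<epsilon> * ((1 + \<epsilon>) * \<gamma> y)" by (simp add: power2_eq_square algebra_simps)
    then show ?thesis using e by simp
  qed
  have le: "\<mu> y \<le> \<gamma> y" for y
  proof (rule field_le_epsilon)
    fix e :: real assume e: "e > 0"
    define \<epsilon> where "\<epsilon> = min 1 e"
    have "\<mu> y \<le> (1 + \<epsilon>) * \<gamma> y" using e by (intro step) (auto simp: \<epsilon>_def)
    also have "\<dots> = \<gamma> y + \<epsilon> * \<gamma> y" by (simp add: algebra_simps)
    also have "\<epsilon> * \<gamma> y \<le> \<epsilon> * 1" using \<gamma>le1[of y] e by (intro mult_left_mono) (auto simp: \<epsilon>_def)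
    finally show "\<mu> y \<le> \<gamma> y + e" by (simp add: \<epsilon>_def)
  qed
  have "(\<Sum>x\<in>UNIV. \<gamma> x - \<mu> x) = 0" using \<gamma>s \<mu>s by (simp add: sum_subtractf)
  then have "\<forall>x\<in>UNIV. \<gamma> x - \<mu> x = 0" using le by (subst (asm) sum_nonneg_eq_0_iff) auto
  then show ?thesis by (auto simp: \<gamma>_def fun_eq_iff)
qed



lemma ereal_between: "ereal a \<le> x \<Longrightarrow> x \<le> ereal b \<Longrightarrow> x = ereal (real_of_ereal x) \<and> a \<le> real_of_ereal x \<and> real_of_ereal x \<le> b"
  by (cases x) auto

lemma Psym_bounds:
  fixes \<gamma> \<mu> :: "('i::finite \<Rightarrow> 'a::{finite,linorder}) \<Rightarrow> real"
  assumes gp: "is_prob \<gamma>" and gpos: "\<And>x. \<gamma> x > 0" and mm: "marginal \<mu> = marginal \<gamma>"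
  shows "ereal (integ \<gamma> g + ent \<gamma> - (\<Sum>i\<in>UNIV. ent (marginal \<gamma> i))) \<le> Psym g (marginal \<mu>)"
    and "Psym g (marginal \<mu>) \<le> ereal (pressure g - (\<Sum>i\<in>UNIV. ent (marginal \<gamma> i)))"
proof -
  define M where "M = marginal \<gamma>"
  have nn: "M i t \<ge> 0" for i t
    unfolding M_def marginal_def using gp by (intro sum_nonneg) (auto simp: is_prob_def)
  have s1: "(\<Sum>t\<in>UNIV. M i t) = 1" for i
    unfolding M_def marginal_def using gp by (simp add: sum_marginal_group is_prob_def)
  have ex: "\<exists>\<xi>. approx_seq \<xi> M" by (rule approx_exists[OF nn s1])
  define \<xi> where "\<xi> = (SOME \<xi>. approx_seq \<xi> M)"
  have ap: "approx_seq \<xi> M" unfolding \<xi>_def using ex by (rule someI_ex)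
  have P: "Psym g (marginal \<mu>) = Limsup sequentially (\<lambda>N. ereal (ln (sym_partition g \<xi> N) / real N))"
    unfolding Psym_def mm M_def[symmetric] \<xi>_def Let_def ..
  have Mpos: "M i t > 0" for i t unfolding M_def by (rule marginal_pos[OF gpos])
  show "ereal (integ \<gamma> g + ent \<gamma> - (\<Sum>i\<in>UNIV. ent (marginal \<gamma> i))) \<le> Psym g (marginal \<mu>)"
    unfolding P M_def[symmetric] by (rule Psym_lower_seq[OF ap gp gpos]) (simp add: M_def)
  show "Psym g (marginal \<mu>) \<le> ereal (pressure g - (\<Sum>i\<in>UNIV. ent (marginal \<gamma> i)))"
    unfolding P M_def[symmetric] by (rule Psym_upper_seq[OF ap Mpos])
qed

theorem proposition4p6:
  fixes h :: "('i::finite \<Rightarrow> 'a::{finite,linorder}) \<Rightarrow> real"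
    and \<mu> :: "('i \<Rightarrow> 'a) \<Rightarrow> real"
  assumes "is_prob \<mu>"
  shows "\<mu> = gibbs h \<longleftrightarrow>
           (mutual_equilibrium \<mu> h \<and> (\<forall>i. marginal \<mu> i = gibbs (hmarg h i)))"
proof -
  define \<gamma> where "\<gamma> = gibbs h"
  define S where "S = (\<Sum>i\<in>UNIV. ent (marginal \<gamma> i))"
  have gp: "is_prob \<gamma>" unfolding \<gamma>_def by (rule gibbs_prob)
  have gpos: "\<And>x. \<gamma> x > 0" unfolding \<gamma>_def by (rule gibbs_pos)
  have gm: "\<And>i. marginal \<gamma> i = gibbs (hmarg h i)" unfolding \<gamma>_def by (rule gibbs_marginal)
  have ge: "integ \<gamma> h + ent \<gamma> = pressure h" unfolding \<gamma>_def by (rule gibbs_ent)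
  define Fr where "Fr g = real_of_ereal (Psym g (marginal \<mu>))" for g
  have key: "Psym g (marginal \<mu>) = ereal (Fr g) \<and> integ \<gamma> g + ent \<gamma> - S \<le> Fr g \<and> Fr g \<le> pressure g - S"
    if mm: "marginal \<mu> = marginal \<gamma>" for g
    unfolding Fr_def S_def
    by (rule ereal_between[OF Psym_bounds(1)[OF gp gpos mm] Psym_bounds(2)[OF gp gpos mm]])
  have Frh: "Fr h = pressure h - S" if mm: "marginal \<mu> = marginal \<gamma>"
    using key[OF mm, of h] ge by linarith
  have Isym_eq: "Isym \<mu> = (SUP g\<in>UNIV. ereal (integ \<mu> g - Fr g))" if mm: "marginal \<mu> = marginal \<gamma>"
    unfolding Isym_def using key[OF mm] by simp
  show ?thesis
  proof
    assume mu: "\<mu> = gibbs h"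
    then have mug: "\<mu> = \<gamma>" by (simp add: \<gamma>_def)
    have mm: "marginal \<mu> = marginal \<gamma>" using mug by simp
    have "Isym \<mu> = ereal (integ \<mu> h - Fr h)"
    proof (rule antisym)
      show "Isym \<mu> \<le> ereal (integ \<mu> h - Fr h)"
        unfolding Isym_eq[OF mm]
      proof (rule SUP_least)
        fix g :: "('i \<Rightarrow> 'a) \<Rightarrow> real"
        have "integ \<mu> g - Fr g \<le> integ \<mu> h - Fr h"
          using key[OF mm, of g] Frh[OF mm] ge mug by simp
        then show "ereal (integ \<mu> g - Fr g) \<le> ereal (integ \<mu> h - Fr h)" by simp
      qed
      show "ereal (integ \<mu> h - Fr h) \<le> Isym \<mu>"
        unfolding Isym_eq[OF mm] by (rule SUP_upper) simp
    qed
    then have "mutual_equilibrium \<mu> h"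
      unfolding mutual_equilibrium_def using key[OF mm, of h] by simp
    moreover have "\<forall>i. marginal \<mu> i = gibbs (hmarg h i)" using mm gm by simp
    ultimately show "mutual_equilibrium \<mu> h \<and> (\<forall>i. marginal \<mu> i = gibbs (hmarg h i))" by simp
  next
    assume r: "mutual_equilibrium \<mu> h \<and> (\<forall>i. marginal \<mu> i = gibbs (hmarg h i))"
    have mm: "marginal \<mu> = marginal \<gamma>" using r gm by (auto simp: fun_eq_iff)
    have Iv: "Isym \<mu> = ereal (integ \<mu> h - Fr h)"
      using r key[OF mm, of h] by (simp add: mutual_equilibrium_def)
    have "integ \<mu> g - pressure g \<le> integ \<mu> h - pressure h" for g
    proof -
      have "ereal (integ \<mu> g - Fr g) \<le> Isym \<mu>"
        unfolding Isym_eq[OF mm] by (rule SUP_upper) simp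
      then have "integ \<mu> g - Fr g \<le> integ \<mu> h - Fr h" using Iv by simp
      then show ?thesis using key[OF mm, of g] Frh[OF mm] by linarith
    qed
    then show "\<mu> = gibbs h" by (rule gibbs_unique[OF assms])
  qed
qed


end
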